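(* Let $1\le r<\infty$, $d\in\mathbb{N}$, $\varepsilon>0$. Let $a=\lceil(8/\varepsilon+3)^r\rceil$ and $M=\{a^{j-1}: j\in\mathbb{N}\}$. Let $\bar m,\bar n\in[M]^d$ with $m_1<n_1<\dots<m_d<n_d$ and let $k>n_d$. Let $F\colon S_{\ell_\infty^k}\to S_{\ell_r^k}$ be a support preserving and step preserving map. Then \[\|F(z(\bar m))-F(z(\bar n))\|_r>1-\varepsilon.\]
   Context: $S_{\ell_p^k}$ is the unit sphere of $(\mathbb{R}^k,\|\cdot\|_p)$. $[M]^d$ is the set of increasing $d$-tuples from $M$. For $\bar m\in[\mathbb{N}]^d$ with $m_0=0$, $z(\bar m)=\sum_{s=1}^d(1-\frac{s-1}{d})1_{(m_{s-1},m_s]}$, viewed in $S_{\ell_\infty^k}$ for $k\ge m_d$, where $1_{(a,b]}$ is the indicator vector of $\{i:a<i\le b\}$. $\mathrm{supp}(x)=\{i:x_i\ne0\}$; $F$ is support preserving if $\mathrm{supp}(F(x))=\mathrm{supp}(x)$ for all $x$; $F=(F_i)$ is step preserving if $x_i=x_j$ implies $F_i(x)=F_j(x)$. *)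

theory Defs
  imports Complex_Main
begin

text \<open>Vectors of \<open>R^k\<close> are represented as functions \<open>nat \<Rightarrow> real\<close> with coordinates
  indexed by \<open>{1..k}\<close> and vanishing outside \<open>{1..k}\<close>.\<close>

definition vec_on :: "nat \<Rightarrow> (nat \<Rightarrow> real) \<Rightarrow> bool" where
  "vec_on k x \<longleftrightarrow> (\<forall>i. i \<notin> {1..k} \<longrightarrow> x i = 0)"

definition sup_norm :: "nat \<Rightarrow> (nat \<Rightarrow> real) \<Rightarrow> real" where
  "sup_norm k x = Max ((\<lambda>i. \<bar>x i\<bar>) ` {1..k} \<union> {0})"

definition lp_norm :: "real \<Rightarrow> nat \<Rightarrow> (nat \<Rightarrow> real) \<Rightarrow> real" where
  "lp_norm p k x = (\<Sum>i=1..k. \<bar>x i\<bar> powr p) powr (1 / p)"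

definition S_inf :: "nat \<Rightarrow> (nat \<Rightarrow> real) set" where
  "S_inf k = {x. vec_on k x \<and> sup_norm k x = 1}"

definition S_lp :: "real \<Rightarrow> nat \<Rightarrow> (nat \<Rightarrow> real) set" where
  "S_lp p k = {x. vec_on k x \<and> lp_norm p k x = 1}"

definition supp :: "nat \<Rightarrow> (nat \<Rightarrow> real) \<Rightarrow> nat set" where
  "supp k x = {i \<in> {1..k}. x i \<noteq> 0}"

definition support_preserving :: "nat \<Rightarrow> ((nat \<Rightarrow> real) \<Rightarrow> (nat \<Rightarrow> real)) \<Rightarrow> bool" where
  "support_preserving k F \<longleftrightarrow> (\<forall>x \<in> S_inf k. supp k (F x) = supp k x)"

definition step_preserving :: "nat \<Rightarrow> ((nat \<Rightarrow> real) \<Rightarrow> (nat \<Rightarrow> real)) \<Rightarrow> bool" where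
  "step_preserving k F \<longleftrightarrow>
     (\<forall>x \<in> S_inf k. \<forall>i \<in> {1..k}. \<forall>j \<in> {1..k}. x i = x j \<longrightarrow> F x i = F x j)"

definition ind :: "nat \<Rightarrow> nat \<Rightarrow> nat \<Rightarrow> real" where
  "ind a b i = (if a < i \<and> i \<le> b then 1 else 0)"

text \<open>A \<open>d\<close>-tuple \<open>m_1,\<dots>,m_d\<close> is a function \<open>m\<close> on \<open>{1..d}\<close>; \<open>m_0 = 0\<close>.\<close>
definition z :: "nat \<Rightarrow> (nat \<Rightarrow> nat) \<Rightarrow> (nat \<Rightarrow> real)" where
  "z d m = (\<lambda>i. \<Sum>s=1..d. (1 - real (s - 1) / real d) *
              ind (if s - 1 = 0 then 0 else m (s - 1)) (m s) i)"

end

theory Submission imports Defs "HOL-Analysis.Analysis" begin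

lemma conv_ineq:
  fixes x y r t :: real
  assumes r: "r \<ge> 1" and t: "0 < t" "t < 1"
  shows "\<bar>x\<bar> powr r \<le> (1-t) powr (1-r) * \<bar>x-y\<bar> powr r + t powr (1-r) * \<bar>y\<bar> powr r"
proof -
  define w where "w = \<bar>x-y\<bar>"
  define v where "v = \<bar>y\<bar>"
  have w0: "w \<ge> 0" and v0: "v \<ge> 0" by (auto simp: w_def v_def)
  have "\<bar>x\<bar> \<le> w + v" unfolding w_def v_def by linarith
  hence 1: "\<bar>x\<bar> powr r \<le> (w+v) powr r" using r by (intro powr_mono2) auto
  have "(1-t) powr 0 \<le> (1-t) powr (1-r)" using r t by (intro powr_mono') auto
  hence t1: "(1-t) powr (1-r) \<ge> 1" using t by simp
  have "t powr 0 \<le> t powr (1-r)" using r t by (intro powr_mono') auto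
  hence t2: "t powr (1-r) \<ge> 1" using t by simp
  have 2: "(w+v) powr r \<le> (1-t) powr (1-r) * w powr r + t powr (1-r) * v powr r"
  proof (cases "w = 0 \<or> v = 0")
    case True
    then show ?thesis
    proof
      assume "w = 0"
      have "1 * v powr r \<le> t powr (1-r) * v powr r" by (rule mult_right_mono) (use t2 in auto)
      then show ?thesis using \<open>w = 0\<close> r by simp
    next
      assume "v = 0"
      have "1 * w powr r \<le> (1-t) powr (1-r) * w powr r" by (rule mult_right_mono) (use t1 in auto)
      then show ?thesis using \<open>v = 0\<close> r by simp
    qed
  next
    case False
    hence wp: "w > 0" and vp: "v > 0" using w0 v0 by auto
    have eq: "w + v = (1 - t) *\<^sub>R (w/(1-t)) + t *\<^sub>R (v/t)" using t by simp
    have "(w+v) powr r \<le> (1-t) * (w/(1-t)) powr r + t * (v/t) powr r"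
      unfolding eq using t wp vp by (intro convex_onD[OF powr_convex[OF r]]) auto
    also have "(1-t) * (w/(1-t)) powr r = (1-t) powr (1-r) * w powr r"
      using t wp by (simp add: powr_divide powr_diff field_simps)
    also have "t * (v/t) powr r = t powr (1-r) * v powr r"
      using t vp by (simp add: powr_divide powr_diff field_simps)
    finally show ?thesis .
  qed
  show ?thesis using 1 2 unfolding w_def v_def by linarith
qed


lemma arith_final:
  fixes r \<epsilon> A :: real
  assumes r: "r \<ge> 1" and e: "0 < \<epsilon>" "\<epsilon> \<le> 1" and A: "A \<ge> (8/\<epsilon>+3) powr r"
  shows "A > 1" "1/(A-1) * (1 + (\<epsilon>/2) powr (1-r)) < \<epsilon>"
proof -
  define c where "c = 2/\<epsilon>"
  have c2: "c \<ge> 2" using e by (simp add: c_def field_simps)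
  have tc: "(\<epsilon>/2) powr (1-r) = c powr (r-1)"
  proof -
    have h: "\<epsilon>/2 = c powr (-1)" using c2 e by (simp add: powr_minus c_def)
    have "(-1)*(1-r) = r - 1" by simp
    thus ?thesis unfolding h powr_powr by metis
  qed
  have "8/\<epsilon>+3 \<ge> 4*c" by (simp add: c_def)
  hence "(8/\<epsilon>+3) powr r \<ge> (4*c) powr r" using c2 r by (intro powr_mono2) auto
  also have "(4*c) powr r = 4 powr r * c powr r" using c2 by (simp add: powr_mult)
  also have "4 powr r \<ge> 4 powr 1" using r by (intro powr_mono) auto
  hence "4 powr r * c powr r \<ge> 4 * c powr r" using c2 by (intro mult_right_mono) auto
  finally have A4: "A \<ge> 4 * c powr r" using A by linarith
  have cr: "c powr r \<ge> c" using powr_mono[of 1 r c] r c2 by simp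
  have cmul: "c * c powr (r-1) = c powr r"
    using c2 powr_add[of c 1 "r-1"] by simp
  show A1: "A > 1" using A4 cr c2 by linarith
  have "c + c powr r < 2*(A-1)" using A4 cr c2 by (smt (verit))
  hence "c * (1 + c powr (r-1)) < 2*(A-1)" using cmul by (simp add: algebra_simps)
  hence "(1 + c powr (r-1)) < \<epsilon> * (A-1)" using e by (simp add: c_def field_simps)
  thus "1/(A-1) * (1 + (\<epsilon>/2) powr (1-r)) < \<epsilon>" using A1 tc by (simp add: field_simps)
qed

lemma sum_concat:
  fixes g :: "nat \<Rightarrow> real"
  assumes "a \<le> b" "b \<le> c"
  shows "sum g {a<..c} = sum g {a<..b} + sum g {b<..c}"
proof -
  have "{a<..c} = {a<..b} \<union> {b<..c}" using assms by auto
  thus ?thesis by (simp add: sum.union_disjoint[symmetric] ivl_disj_int)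
qed

lemma sum_blocks2:
  fixes c :: "nat \<Rightarrow> nat" and g :: "nat \<Rightarrow> real"
  assumes "\<And>j. j < 2*D \<Longrightarrow> c j \<le> c (Suc j)"
  shows "sum g {c 0<..c (2*D)} = sum (\<lambda>s. sum g (greaterThanAtMost (c (2 * s)) (c (2 * s+1))) + sum g (greaterThanAtMost (c (2 * s+1)) (c (2 * s+2)))) {..<D}"
  using assms
proof (induction D)
  case 0
  then show ?case by simp
next
  case (Suc D)
  note outer = Suc.prems
  have mono: "c 0 \<le> c j" if "j \<le> 2*D" for j
    using that
  proof (induction j)
    case 0 then show ?case by simp
  next
    case (Suc j) then show ?case using outer[of j] by force
  qed
  have a1: "c (2*D) \<le> c (2*D+1)" using Suc.prems[of "2*D"] by simp
  have a2: "c (2*D+1) \<le> c (2*D+2)" using Suc.prems[of "2*D+1"] by simp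
  have e2: "2 * Suc D = 2*D+2" by simp
  have "sum g {c 0<..c (2*D+2)} = sum g {c 0<..c (2*D)} + sum g {c (2*D)<..c (2*D+2)}"
    using mono[of "2*D"] a1 a2 by (intro sum_concat) auto
  also have "sum g {c (2*D)<..c (2*D+2)} = sum g {c (2*D)<..c (2*D+1)} + sum g {c (2*D+1)<..c (2*D+2)}"
    using a1 a2 by (intro sum_concat) auto
  also have "sum g {c 0<..c (2*D)} = sum (\<lambda>s. sum g (greaterThanAtMost (c (2 * s)) (c (2 * s+1))) + sum g (greaterThanAtMost (c (2 * s+1)) (c (2 * s+2)))) {..<D}"
    using Suc by auto
  finally show ?case unfolding e2 by simp
qed

lemma block_ratio:
  fixes g :: "nat \<Rightarrow> real" and A :: real
  assumes const: "\<And>i j. i \<in> {p<..q} \<Longrightarrow> j \<in> {p<..q} \<Longrightarrow> g i = g j"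
    and nn: "\<And>i. g i \<ge> 0" and A: "A > 1"
    and pp: "p \<le> p'" "p' \<le> q"
  shows "(A-1) * (real p' - real p) \<le> real q - real p' \<Longrightarrow> sum g {p<..p'} \<le> 1/(A-1) * sum g {p'<..q}"
    and "(A-1) * (real q - real p') \<le> real p' - real p \<Longrightarrow> sum g {p'<..q} \<le> 1/(A-1) * sum g {p<..p'}"
proof -
  have s1: "sum g {p<..p'} = (real p' - real p) * g q"
  proof -
    have "sum g {p<..p'} = sum (\<lambda>_. g q) {p<..p'}"
      using pp by (intro sum.cong) (auto intro: const)
    thus ?thesis using pp by simp
  qed
  have s2: "sum g {p'<..q} = (real q - real p') * g q"
  proof -
    have "sum g {p'<..q} = sum (\<lambda>_. g q) {p'<..q}"
      using pp by (intro sum.cong) (auto intro: const)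
    thus ?thesis using pp by simp
  qed
  have gq: "g q \<ge> 0" by (rule nn)
  show "(A-1) * (real p' - real p) \<le> real q - real p' \<Longrightarrow> sum g {p<..p'} \<le> 1/(A-1) * sum g {p'<..q}"
  proof -
    assume h: "(A-1) * (real p' - real p) \<le> real q - real p'"
    have "((A-1) * (real p' - real p)) * g q \<le> (real q - real p') * g q"
      using mult_right_mono[OF h gq] .
    thus ?thesis unfolding s1 s2 using A by (simp add: field_simps)
  qed
  show "(A-1) * (real q - real p') \<le> real p' - real p \<Longrightarrow> sum g {p'<..q} \<le> 1/(A-1) * sum g {p<..p'}"
  proof -
    assume h: "(A-1) * (real q - real p') \<le> real p' - real p"
    have "((A-1) * (real q - real p')) * g q \<le> (real p' - real p) * g q"
      using mult_right_mono[OF h gq] .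
    thus ?thesis unfolding s1 s2 using A by (simp add: field_simps)
  qed
qed


lemma mono_seq:
  fixes m :: "nat \<Rightarrow> nat"
  assumes inc: "\<forall>s\<in>{1..<d}. m s < m (s+1)"
  shows "1 \<le> p \<Longrightarrow> p < q \<Longrightarrow> q \<le> d \<Longrightarrow> m p < m q"
proof (induction q)
  case 0 then show ?case by simp
next
  case (Suc q)
  show ?case
  proof (cases "p = q")
    case True then show ?thesis using inc Suc.prems by auto
  next
    case False
    hence "m p < m q" using Suc by auto
    moreover have "m q < m (Suc q)" using inc Suc.prems False by auto
    ultimately show ?thesis by simp
  qed
qed

lemma z_vals:
  fixes m :: "nat \<Rightarrow> nat"
  assumes d: "d \<ge> 1" and inc: "\<forall>s\<in>{1..<d}. m s < m (s+1)"
  shows "\<And>s i. s \<in> {1..d} \<Longrightarrow> (if s - 1 = 0 then 0 else m (s-1)) < i \<Longrightarrow> i \<le> m s \<Longrightarrow>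
           z d m i = 1 - real (s-1) / real d"
    and "\<And>i. i = 0 \<or> m d < i \<Longrightarrow> z d m i = 0"
proof -
  have mle: "m p \<le> m q" if "1 \<le> p" "p \<le> q" "q \<le> d" for p q
    using mono_seq[OF inc, of p q] that by (cases "p = q") auto
  fix s i assume s: "s \<in> {1..d}" and lo: "(if s - 1 = 0 then 0 else m (s-1)) < i" and hi: "i \<le> m s"
  have ind_eq: "ind (if s' - 1 = 0 then 0 else m (s'-1)) (m s') i = (if s' = s then 1 else 0)"
    if s': "s' \<in> {1..d}" for s'
  proof (cases "s' = s")
    case True then show ?thesis using lo hi by (simp add: ind_def split: if_splits)
  next
    case False
    show ?thesis
    proof (cases "s' < s")
      case True
      hence "s - 1 \<noteq> 0" using s' by auto
      hence "m (s-1) < i" using lo by simp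
      moreover have "m s' \<le> m (s-1)" using True s' s by (intro mle) auto
      ultimately show ?thesis using False by (simp add: ind_def)
    next
      case False2: False
      hence "s' > s" using False by simp
      hence "s' - 1 \<noteq> 0" using s by auto
      moreover have "m s \<le> m (s'-1)" using \<open>s' > s\<close> s' s by (intro mle) auto
      ultimately show ?thesis using hi False by (simp add: ind_def)
    qed
  qed
  have "z d m i = (\<Sum>s'=1..d. (1 - real (s' - 1) / real d) * (if s' = s then 1 else 0))"
    unfolding z_def by (rule sum.cong[OF refl]) (simp only: ind_eq)
  also have "\<dots> = (\<Sum>s'=1..d. if s' = s then (1 - real (s' - 1) / real d) else 0)"
    by (intro sum.cong) auto
  also have "\<dots> = 1 - real (s-1) / real d" using s by (simp add: sum.delta')
  finally show "z d m i = 1 - real (s-1) / real d" .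
next
  have mle: "m p \<le> m q" if "1 \<le> p" "p \<le> q" "q \<le> d" for p q
    using mono_seq[OF inc, of p q] that by (cases "p = q") auto
  fix i assume i: "i = 0 \<or> m d < i"
  have "ind (if s' - 1 = 0 then 0 else m (s'-1)) (m s') i = 0" if s': "s' \<in> {1..d}" for s'
  proof -
    have "m s' \<le> m d" using s' by (intro mle) auto
    thus ?thesis using i by (auto simp: ind_def)
  qed
  thus "z d m i = 0" unfolding z_def by (intro sum.neutral) auto
qed


lemma block_exists:
  fixes m :: "nat \<Rightarrow> nat"
  assumes "1 \<le> i" "i \<le> m d" "d \<ge> 1"
  shows "\<exists>s\<in>{1..d}. (if s - 1 = 0 then 0 else m (s-1)) < i \<and> i \<le> m s"
proof -
  let ?P = "\<lambda>s. 1 \<le> s \<and> i \<le> m s"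
  define s where "s = (LEAST s. ?P s)"
  have Pd: "?P d" using assms by simp
  have P: "?P s" unfolding s_def by (rule LeastI[of ?P d, OF Pd])
  have sd: "s \<le> d" unfolding s_def by (rule Least_le[of ?P d, OF Pd])
  have lo: "(if s - 1 = 0 then 0 else m (s-1)) < i"
  proof (cases "s - 1 = 0")
    case True then show ?thesis using assms by simp
  next
    case False
    have lt: "s - 1 < (LEAST s. ?P s)" using False unfolding s_def[symmetric] by simp
    have "\<not> ?P (s - 1)" by (rule not_less_Least[OF lt])
    thus ?thesis using False by auto
  qed
  show ?thesis using P sd lo by auto
qed

lemma z_props:
  fixes m :: "nat \<Rightarrow> nat"
  assumes d: "d \<ge> 1" and inc: "\<forall>s\<in>{1..<d}. m s < m (s+1)" and m1: "0 < m 1" and mk: "m d < k"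
  shows "z d m \<in> S_inf k"
    and "\<And>i. m d < i \<Longrightarrow> z d m i = 0"
    and "\<And>i. i \<in> {1..k} \<Longrightarrow> i \<le> m d \<Longrightarrow> z d m i \<noteq> 0"
proof -
  note zv = z_vals[OF d inc]
  show z0: "\<And>i. m d < i \<Longrightarrow> z d m i = 0" using zv(2) by auto
  show "\<And>i. i \<in> {1..k} \<Longrightarrow> i \<le> m d \<Longrightarrow> z d m i \<noteq> 0"
  proof -
    fix i assume i: "i \<in> {1..k}" "i \<le> m d"
    then obtain s where s: "s \<in> {1..d}" "(if s - 1 = 0 then 0 else m (s-1)) < i" "i \<le> m s"
      using block_exists[of i m d] d by auto
    have "real (s-1) < real d" using s(1) by auto
    hence "real (s-1) / real d < 1" using d by (simp add: field_simps)
    moreover have "z d m i = 1 - real (s-1) / real d" using zv(1)[OF s] .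
    ultimately show "z d m i \<noteq> 0" by linarith
  qed
  have le1: "\<bar>z d m i\<bar> \<le> 1" for i
  proof (cases "1 \<le> i \<and> i \<le> m d")
    case True
    then obtain s where s: "s \<in> {1..d}" "(if s - 1 = 0 then 0 else m (s-1)) < i" "i \<le> m s"
      using block_exists[of i m d] d by auto
    have "real (s-1) \<le> real d" using s(1) by auto
    hence "real (s-1) / real d \<le> 1" "real (s-1) / real d \<ge> 0" using d by (auto simp: field_simps)
    thus ?thesis using zv(1)[OF s] by simp
  next
    case False
    hence "i = 0 \<or> m d < i" by auto
    thus ?thesis using zv(2) by simp
  qed
  have "z d m 1 = 1 - real (1-1) / real d" by (rule zv(1)) (use m1 d in auto)
  hence z1: "z d m 1 = 1" by simp
  have vec: "vec_on k (z d m)" unfolding vec_on_def using zv(2) mk by auto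
  have "sup_norm k (z d m) = 1" unfolding sup_norm_def
  proof (rule Max_eqI)
    show "finite ((\<lambda>i. \<bar>z d m i\<bar>) ` {1..k} \<union> {0})" by simp
    show "y \<le> 1" if "y \<in> (\<lambda>i. \<bar>z d m i\<bar>) ` {1..k} \<union> {0}" for y using that le1 by auto
    show "1 \<in> (\<lambda>i. \<bar>z d m i\<bar>) ` {1..k} \<union> {0}" 
    proof -
      have "(1::nat) \<in> {1..k}" using mk by simp
      hence "\<bar>z d m 1\<bar> \<in> (\<lambda>i. \<bar>z d m i\<bar>) ` {1..k}" by (rule imageI)
      thus ?thesis using z1 by simp
    qed
  qed
  thus "z d m \<in> S_inf k" using vec by (simp add: S_inf_def)
qed


lemma pow_step:
  fixes a x y :: nat
  assumes a: "a \<ge> 2" and x: "x \<in> {a ^ j | j. True}" and y: "y \<in> {a ^ j | j. True}" and xy: "x < y"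
  shows "a * x \<le> y"
proof -
  obtain i where i: "x = a ^ i" using x by auto
  obtain j where j: "y = a ^ j" using y by auto
  have "i < j" using xy a unfolding i j by (simp add: power_strict_increasing_iff)
  hence "a ^ Suc i \<le> a ^ j" using a by (intro power_increasing) auto
  thus ?thesis using i j by simp
qed

lemma ratio_arith:
  fixes A x y z :: real
  assumes "A > 1" "A * y \<le> z" "x \<ge> 0"
  shows "(A - 1) * (y - x) \<le> z - y"
proof -
  have "(A-1) * x \<ge> 0" using assms by simp
  moreover have "(A - 1) * (y - x) = A * y - y - (A-1) * x" by (simp add: algebra_simps)
  ultimately show ?thesis using assms by linarith
qed

lemma shift_sum:
  fixes f :: "nat \<Rightarrow> real"
  assumes "\<And>s. f s \<ge> 0"
  shows "(\<Sum>s<d. if Suc s < d then f (Suc s) else 0) \<le> (\<Sum>s<d. f s)"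
proof -
  define h where "h j = (if j < d then f j else 0)" for j
  have "(\<Sum>s<Suc d. h s) = h 0 + (\<Sum>s<d. h (Suc s))" by (rule sum.lessThan_Suc_shift)
  moreover have "(\<Sum>s<Suc d. h s) = (\<Sum>s<d. f s)" by (simp add: h_def)
  moreover have "(\<Sum>s<d. h (Suc s)) = (\<Sum>s<d. if Suc s < d then f (Suc s) else 0)"
    by (simp add: h_def)
  moreover have "h 0 \<ge> 0" using assms by (simp add: h_def)
  ultimately show ?thesis by linarith
qed


lemma F_props:
  fixes m :: "nat \<Rightarrow> nat" and F :: "(nat \<Rightarrow> real) \<Rightarrow> (nat \<Rightarrow> real)" and r :: real
  assumes d: "d \<ge> 1" and inc: "\<forall>s\<in>{1..<d}. m s < m (s+1)" and m1: "0 < m 1" and mk: "m d < k"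
    and r: "r \<ge> 1"
    and FS: "\<forall>x \<in> S_inf k. F x \<in> S_lp r k"
    and sp: "support_preserving k F" and stp: "step_preserving k F"
  shows "\<And>s i j. s \<in> {1..d} \<Longrightarrow> (if s - 1 = 0 then 0 else m (s-1)) < i \<Longrightarrow> i \<le> m s \<Longrightarrow>
            (if s - 1 = 0 then 0 else m (s-1)) < j \<Longrightarrow> j \<le> m s \<Longrightarrow> F (z d m) i = F (z d m) j"
    and "\<And>i. m d < i \<Longrightarrow> F (z d m) i = 0"
    and "(\<Sum>i=1..k. \<bar>F (z d m) i\<bar> powr r) = 1"
proof -
  note zp = z_props[OF d inc m1 mk]
  have uS: "F (z d m) \<in> S_lp r k" using FS zp(1) by blast
  show "F (z d m) i = F (z d m) j" if s: "s \<in> {1..d}" and i: "(if s - 1 = 0 then 0 else m (s-1)) < i" "i \<le> m s"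
     and j: "(if s - 1 = 0 then 0 else m (s-1)) < j" "j \<le> m s" for s i j
  proof -
    have "m s \<le> m d" using mono_seq[OF inc, of s d] s by (cases "s = d") auto
    hence ik: "i \<in> {1..k}" "j \<in> {1..k}" using i j mk by (auto split: if_splits)
    have "z d m i = 1 - real (s-1) / real d" using z_vals(1)[OF d inc s i] .
    moreover have "z d m j = 1 - real (s-1) / real d" using z_vals(1)[OF d inc s j] .
    ultimately have "z d m i = z d m j" by simp
    thus ?thesis using stp zp(1) ik unfolding step_preserving_def by blast
  qed
  show "F (z d m) i = 0" if i: "m d < i" for i
  proof (cases "i \<in> {1..k}")
    case True
    have "z d m i = 0" using zp(2) i .
    hence "i \<notin> supp k (z d m)" by (simp add: supp_def)
    moreover have "supp k (F (z d m)) = supp k (z d m)" using sp zp(1) unfolding support_preserving_def by blast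
    ultimately show ?thesis using True by (auto simp: supp_def)
  next
    case False
    thus ?thesis using uS by (auto simp: S_lp_def vec_on_def)
  qed
  define S where "S = (\<Sum>i=1..k. \<bar>F (z d m) i\<bar> powr r)"
  have S0: "S \<ge> 0" unfolding S_def by (intro sum_nonneg) auto
  have "S powr (1/r) = 1" using uS by (simp add: S_lp_def lp_norm_def S_def)
  hence "(S powr (1/r)) powr r = 1" by simp
  moreover have "(S powr (1/r)) powr r = S" using r S0 by (simp add: powr_powr)
  ultimately show "(\<Sum>i=1..k. \<bar>F (z d m) i\<bar> powr r) = 1" unfolding S_def by simp
qed

theorem lemma4p1:
  fixes r \<epsilon> :: real and d k :: nat and m n :: "nat \<Rightarrow> nat"
    and F :: "(nat \<Rightarrow> real) \<Rightarrow> (nat \<Rightarrow> real)"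
  assumes "1 \<le> r" and "\<epsilon> > 0" and "d \<ge> 1"
    and "\<forall>s \<in> {1..d}. m s \<in> {(nat \<lceil>(8 / \<epsilon> + 3) powr r\<rceil>) ^ j | j. True}"
    and "\<forall>s \<in> {1..d}. n s \<in> {(nat \<lceil>(8 / \<epsilon> + 3) powr r\<rceil>) ^ j | j. True}"
    and "\<forall>s \<in> {1..d}. m s < n s"
    and "\<forall>s \<in> {1..<d}. n s < m (s + 1)"
    and "k > n d"
    and "\<forall>x \<in> S_inf k. F x \<in> S_lp r k"
    and "support_preserving k F"
    and "step_preserving k F"
  shows "lp_norm r k (\<lambda>i. F (z d m) i - F (z d n) i) > 1 - \<epsilon>"
proof (cases "\<epsilon> > 1")
  case True
  have "lp_norm r k (\<lambda>i. F (z d m) i - F (z d n) i) \<ge> 0" unfolding lp_norm_def by simp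
  thus ?thesis using True by linarith
next
  case False
  note r = assms(1) and e0 = assms(2) and d = assms(3)
  have e1: "\<epsilon> \<le> 1" using False by simp
  define a where "a = nat \<lceil>(8 / \<epsilon> + 3) powr r\<rceil>"
  have mM: "\<forall>s\<in>{1..d}. m s \<in> {a ^ j | j. True}" using assms(4) unfolding a_def .
  have nM: "\<forall>s\<in>{1..d}. n s \<in> {a ^ j | j. True}" using assms(5) unfolding a_def .
  have aR: "real a \<ge> (8 / \<epsilon> + 3) powr r" unfolding a_def by linarith
  note AF = arith_final[OF r e0 e1 aR]
  have a2: "a \<ge> 2" using AF(1) by linarith
  define \<eta> where "\<eta> = 1 / (real a - 1)"
  have eta0: "\<eta> \<ge> 0" using AF(1) by (simp add: \<eta>_def)
  define t where "t = \<epsilon> / 2"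
  have t0: "0 < t" "t < 1" using e0 e1 by (auto simp: t_def)
  define P1 where "P1 = (1 - t) powr (1 - r)"
  define P2 where "P2 = t powr (1 - r)"
  have key: "\<eta> * (1 + P2) < \<epsilon>" using AF(2) by (simp add: \<eta>_def P2_def t_def)
  have P1pos: "P1 > 0" using t0 by (simp add: P1_def)
  have P2pos: "P2 \<ge> 0" by (simp add: P2_def)
  have hm: "a * m s \<le> n s" if "s \<in> {1..d}" for s
    using pow_step[OF a2] mM nM assms(6) that by blast
  have hn: "a * n s \<le> m (s+1)" if "s \<in> {1..<d}" for s
    using pow_step[OF a2] mM nM assms(7) that by fastforce
  have incm: "\<forall>s\<in>{1..<d}. m s < m (s+1)"
  proof
    fix s assume s: "s \<in> {1..<d}"
    have "m s < n s" using assms(6) s by auto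
    moreover have "n s < m (s+1)" using assms(7) s by auto
    ultimately show "m s < m (s+1)" by simp
  qed
  have incn: "\<forall>s\<in>{1..<d}. n s < n (s+1)"
  proof
    fix s assume s: "s \<in> {1..<d}"
    have "n s < m (s+1)" using assms(7) s by auto
    moreover have "m (s+1) < n (s+1)" using assms(6) s by auto
    ultimately show "n s < n (s+1)" by simp
  qed
  have m1: "0 < m 1"
  proof -
    have "m 1 \<in> {a ^ j | j. True}" using mM d by auto
    then obtain j where "m 1 = a ^ j" by auto
    thus ?thesis using a2 by simp
  qed
  have "m 1 < n 1" using bspec[OF assms(6), of 1] d by simp
  hence n1: "0 < n 1" by simp
  have mdn: "m d < n d" using bspec[OF assms(6), of d] d by simp
  have mk: "m d < k" using mdn assms(8) by simp
  note zm = z_props[OF d incm m1 mk]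
  note zn = z_props[OF d incn n1 assms(8)]
  note Fm = F_props[OF d incm m1 mk r assms(9,10,11)]
  note Fn = F_props[OF d incn n1 assms(8) r assms(9,10,11)]
  define u where "u = F (z d m)"
  define v where "v = F (z d n)"
  define U where "U i = \<bar>u i\<bar> powr r" for i
  define V where "V i = \<bar>v i\<bar> powr r" for i
  define W where "W i = \<bar>u i - v i\<bar> powr r" for i
  have U0: "U i \<ge> 0" "V i \<ge> 0" "W i \<ge> 0" for i by (auto simp: U_def V_def W_def)
  define c where "c j = (if even j then (if j = 0 then 0 else n (j div 2)) else m (j div 2 + 1))" for j
  have cmono: "c j \<le> c (Suc j)" if "j < 2 * d" for j
  proof (cases "even j")
    case True
    then obtain s where j: "j = 2 * s" by (auto elim: evenE)
    hence sd: "s < d" using that by simp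
    show ?thesis
    proof (cases "s = 0")
      case True then show ?thesis using j by (simp add: c_def)
    next
      case False
      hence "n s < m (s+1)" using assms(7) sd by auto
      thus ?thesis using j False by (simp add: c_def)
    qed
  next
    case False
    then obtain s where j: "j = 2 * s + 1" by (auto elim: oddE)
    hence sd: "s < d" using that by simp
    hence "m (s+1) < n (s+1)" using assms(6) by auto
    thus ?thesis using j by (simp add: c_def)
  qed
  define Eb where "Eb g s = sum g {(if s = 0 then 0 else n s)<..m (Suc s)}" for g :: "nat \<Rightarrow> real" and s
  define Ob where "Ob g s = sum g {m (Suc s)<..n (Suc s)}" for g :: "nat \<Rightarrow> real" and s
  have decomp: "sum g {1..k} = sum (\<lambda>s. Eb g s + Ob g s) {..<d} + sum g {n d<..k}" for g
  proof -
    have "sum g {c 0<..c (2 * d)} = sum (\<lambda>s. sum g (greaterThanAtMost (c (2 * s)) (c (2 * s + 1))) + sum g (greaterThanAtMost (c (2 * s + 1)) (c (2 * s + 2)))) {..<d}"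
      by (rule sum_blocks2) (rule cmono)
    also have "\<dots> = sum (\<lambda>s. Eb g s + Ob g s) {..<d}"
      by (intro sum.cong refl) (simp add: c_def Eb_def Ob_def)
    finally have 1: "sum g {0<..n d} = sum (\<lambda>s. Eb g s + Ob g s) {..<d}"
      using d by (simp add: c_def)
    have "{1..k} = {0<..k}" by auto
    hence "sum g {1..k} = sum g {0<..n d} + sum g {n d<..k}"
      using assms(8) by (simp add: sum_concat)
    thus ?thesis using 1 by simp
  qed
  have uz: "u i = 0" if "m d < i" for i using Fm(2)[OF that] by (simp add: u_def)
  have vz: "v i = 0" if "n d < i" for i using Fn(2)[OF that] by (simp add: v_def)
  have rpos: "r > 0" using r by simp
  have tailU: "sum U {n d<..k} = 0" using uz mdn rpos by (intro sum.neutral) (auto simp: U_def)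
  have tailV: "sum V {n d<..k} = 0" using vz rpos by (intro sum.neutral) (auto simp: V_def)
  have U1: "sum U {1..k} = 1" using Fm(3) by (simp add: U_def u_def)
  have V1: "sum V {1..k} = 1" using Fn(3) by (simp add: V_def v_def)
  have EOnn: "Eb g s \<ge> 0" "Ob g s \<ge> 0" if "\<And>i. g i \<ge> 0" for g s
    using that by (auto simp: Eb_def Ob_def intro: sum_nonneg)
  define EU where "EU = sum (Eb U) {..<d}"
  define OU where "OU = sum (Ob U) {..<d}"
  define EV where "EV = sum (Eb V) {..<d}"
  define OV where "OV = sum (Ob V) {..<d}"
  define EW where "EW = sum (Eb W) {..<d}"
  define D where "D = sum W {1..k}"
  have sumU: "EU + OU = 1" using decomp[of U] tailU U1 by (simp add: EU_def OU_def sum.distrib)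
  have sumV: "EV + OV = 1" using decomp[of V] tailV V1 by (simp add: EV_def OV_def sum.distrib)
  have EWD: "EW \<le> D"
  proof -
    have "D = sum (Eb W) {..<d} + sum (Ob W) {..<d} + sum W {n d<..k}"
      using decomp[of W] by (simp add: D_def sum.distrib)
    moreover have "sum (Ob W) {..<d} \<ge> 0" using EOnn U0 by (intro sum_nonneg) auto
    moreover have "sum W {n d<..k} \<ge> 0" using U0 by (intro sum_nonneg) auto
    ultimately show ?thesis unfolding EW_def by linarith
  qed
  have A1: "real a > 1" using AF(1) .
  have claimA: "Ob U s \<le> \<eta> * (if Suc s < d then Eb U (Suc s) else 0)" if sd: "s < d" for s
  proof (cases "Suc s < d")
    case True
    have const: "U i = U j" if "i \<in> {m (Suc s)<..m (Suc (Suc s))}" "j \<in> {m (Suc s)<..m (Suc (Suc s))}" for i j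
    proof -
      have "Suc (Suc s) \<in> {1..d}" using True by simp
      from Fm(1)[OF this] that have "u i = u j" by (auto simp: u_def)
      thus ?thesis by (simp add: U_def)
    qed
    have le1: "m (Suc s) \<le> n (Suc s)" using bspec[OF assms(6), of "Suc s"] True by simp
    have hn1: "a * n (Suc s) \<le> m (Suc (Suc s))" using hn[of "Suc s"] True by simp
    moreover have "n (Suc s) \<le> a * n (Suc s)" using a2 by simp
    ultimately have le2: "n (Suc s) \<le> m (Suc (Suc s))" by linarith
    have rat: "(real a - 1) * (real (n (Suc s)) - real (m (Suc s))) \<le> real (m (Suc (Suc s))) - real (n (Suc s))"
    proof (rule ratio_arith[OF A1])
      show "real a * real (n (Suc s)) \<le> real (m (Suc (Suc s)))" using hn1 by (metis of_nat_le_iff of_nat_mult)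
    qed simp
    have "Ob U s \<le> 1 / (real a - 1) * Eb U (Suc s)"
      unfolding Ob_def Eb_def using block_ratio(1)[OF const U0(1) A1 le1 le2 rat] by simp
    thus ?thesis using True by (simp add: \<eta>_def)
  next
    case False
    hence "Suc s = d" using sd by simp
    hence "Ob U s = sum U {m d<..n d}" by (simp add: Ob_def)
    also have "\<dots> = 0" using uz rpos by (intro sum.neutral) (auto simp: U_def)
    finally show ?thesis using False by simp
  qed
  have claimB: "Eb V s \<le> \<eta> * Ob V s" if sd: "s < d" for s
  proof -
    have sd': "Suc s \<in> {1..d}" using sd by simp
    have const: "V i = V j" if "i \<in> {(if s = 0 then 0 else n s)<..n (Suc s)}" "j \<in> {(if s = 0 then 0 else n s)<..n (Suc s)}" for i j
    proof -
      from Fn(1)[OF sd', unfolded diff_Suc_1] that have "v i = v j" by (auto simp: v_def)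
      thus ?thesis by (simp add: V_def)
    qed
    have le1: "(if s = 0 then 0 else n s) \<le> m (Suc s)"
    proof (cases "s = 0")
      case False
      hence "s \<in> {1..<d}" using sd by simp
      from bspec[OF assms(7) this] show ?thesis using False by simp
    qed simp
    have le2: "m (Suc s) \<le> n (Suc s)" using bspec[OF assms(6) sd'] by simp
    have hm1: "a * m (Suc s) \<le> n (Suc s)" using hm[OF sd'] .
    have rat: "(real a - 1) * (real (m (Suc s)) - real (if s = 0 then 0 else n s)) \<le> real (n (Suc s)) - real (m (Suc s))"
    proof (rule ratio_arith[OF A1])
      show "real a * real (m (Suc s)) \<le> real (n (Suc s))" using hm1 by (metis of_nat_le_iff of_nat_mult)
    qed simp
    show ?thesis
      unfolding Ob_def Eb_def \<eta>_def using block_ratio(1)[OF const U0(2) A1 le1 le2 rat] by simp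
  qed
  have EUnn: "EU \<ge> 0" "OU \<ge> 0" "EV \<ge> 0" "OV \<ge> 0"
    unfolding EU_def OU_def EV_def OV_def using EOnn U0 by (auto intro!: sum_nonneg)
  have OUle: "OU \<le> \<eta> * EU"
  proof -
    have "OU \<le> sum (\<lambda>s. \<eta> * (if Suc s < d then Eb U (Suc s) else 0)) {..<d}"
      unfolding OU_def using claimA by (intro sum_mono) auto
    also have "\<dots> = \<eta> * sum (\<lambda>s. if Suc s < d then Eb U (Suc s) else 0) {..<d}"
      by (simp add: sum_distrib_left)
    also have "\<dots> \<le> \<eta> * EU" unfolding EU_def
      using eta0 shift_sum[of "Eb U" d] EOnn U0 by (intro mult_left_mono) auto
    finally show ?thesis .
  qed
  have EVle: "EV \<le> \<eta> * OV"
  proof -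
    have "EV \<le> sum (\<lambda>s. \<eta> * Ob V s) {..<d}"
      unfolding EV_def using claimB by (intro sum_mono) auto
    thus ?thesis by (simp add: sum_distrib_left OV_def)
  qed
  have EUge: "EU \<ge> 1 - \<eta>"
  proof -
    have "EU \<le> 1" using sumU EUnn by linarith
    hence "\<eta> * EU \<le> \<eta>" using eta0 by (simp add: mult_left_le)
    thus ?thesis using sumU OUle by linarith
  qed
  have EVle2: "EV \<le> \<eta>"
  proof -
    have "OV \<le> 1" using sumV EUnn by linarith
    hence "\<eta> * OV \<le> \<eta>" using eta0 by (simp add: mult_left_le)
    thus ?thesis using EVle by linarith
  qed
  have pw: "U i \<le> P1 * W i + P2 * V i" for i
    unfolding U_def W_def V_def P1_def P2_def by (rule conv_ineq[OF r t0])
  have EUle: "EU \<le> P1 * EW + P2 * EV"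
  proof -
    have "Eb U s \<le> P1 * Eb W s + P2 * Eb V s" for s
    proof -
      have "Eb U s \<le> sum (\<lambda>i. P1 * W i + P2 * V i) {(if s = 0 then 0 else n s)<..m (Suc s)}"
        unfolding Eb_def using pw by (intro sum_mono) auto
      thus ?thesis by (simp add: Eb_def sum.distrib sum_distrib_left)
    qed
    hence "EU \<le> sum (\<lambda>s. P1 * Eb W s + P2 * Eb V s) {..<d}"
      unfolding EU_def by (intro sum_mono) auto
    thus ?thesis by (simp add: EW_def EV_def sum.distrib sum_distrib_left)
  qed
  have main: "1 - \<eta> - P2 * \<eta> \<le> P1 * D"
  proof -
    have "P1 * EW \<le> P1 * D" using EWD P1pos by simp
    moreover have "P2 * EV \<le> P2 * \<eta>" using EVle2 P2pos by (simp add: mult_left_mono)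
    ultimately show ?thesis using EUge EUle by linarith
  qed
  define Q where "Q = (1 - t) powr (r - 1)"
  have Qpos: "Q > 0" using t0 by (simp add: Q_def)
  have QP: "Q * P1 = 1"
  proof -
    have "(1 - t) powr ((r - 1) + (1 - r)) = Q * P1" unfolding Q_def P1_def by (rule powr_add)
    moreover have "(1 - t) powr ((r - 1) + (1 - r)) = 1" using t0 by simp
    ultimately show ?thesis by simp
  qed
  have X: "1 - \<eta> - P2 * \<eta> > 1 - \<epsilon>" using key by (simp add: algebra_simps)
  have "D = Q * (P1 * D)" using QP by (simp add: mult.assoc[symmetric])
  also have "Q * (P1 * D) \<ge> Q * (1 - \<eta> - P2 * \<eta>)" using main Qpos by simp
  finally have D1: "D \<ge> Q * (1 - \<eta> - P2 * \<eta>)" .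
  have "Q * (1 - \<eta> - P2 * \<eta>) > Q * (1 - \<epsilon>)" using X Qpos by simp
  moreover have "Q * (1 - \<epsilon>) \<ge> (1 - \<epsilon>) powr (r - 1) * (1 - \<epsilon>)"
  proof (rule mult_right_mono)
    show "(1 - \<epsilon>) powr (r - 1) \<le> Q" unfolding Q_def using r e1 t0 by (intro powr_mono2) (auto simp: t_def)
  qed (use e1 in simp)
  moreover have "(1 - \<epsilon>) powr (r - 1) * (1 - \<epsilon>) = (1 - \<epsilon>) powr r"
  proof -
    have "(1 - \<epsilon>) powr ((r - 1) + 1) = (1 - \<epsilon>) powr (r - 1) * (1 - \<epsilon>) powr 1" by (rule powr_add)
    thus ?thesis using e1 by simp
  qed
  ultimately have Dgt: "D > (1 - \<epsilon>) powr r" using D1 by linarith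
  have "((1 - \<epsilon>) powr r) powr (1 / r) < D powr (1 / r)"
    using Dgt r by (intro powr_less_mono2) auto
  moreover have "((1 - \<epsilon>) powr r) powr (1 / r) = 1 - \<epsilon>" using r e1 by (simp add: powr_powr)
  moreover have "lp_norm r k (\<lambda>i. F (z d m) i - F (z d n) i) = D powr (1 / r)"
    unfolding lp_norm_def D_def W_def u_def v_def by simp
  ultimately show ?thesis by simp
qed
end
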